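(* Let $G$ be a finite group such that the cyclic graph $\Delta(G)$ is connected and $\mathrm{diam}(\Delta(G))>6$. Then the center $Z(G)$ is trivial.
   Context: For a finite group $G$, the cyclic graph $\Delta(G)$ has vertex set $G^{\#}=G\setminus\{1\}$, and distinct vertices $x,y$ are adjacent if and only if the subgroup $\langle x,y\rangle$ is cyclic. The diameter is the maximum graph distance between two vertices. *)

theory Defs
  imports "HOL-Algebra.Algebra"
begin

definition cyc_vertices :: "('a, 'b) monoid_scheme \<Rightarrow> 'a set" where
  "cyc_vertices G = carrier G - {\<one>\<^bsub>G\<^esub>}"

definition cyc_adj :: "('a, 'b) monoid_scheme \<Rightarrow> 'a \<Rightarrow> 'a \<Rightarrow> bool" where
  "cyc_adj G x y \<longleftrightarrow> x \<in> cyc_vertices G \<and> y \<in> cyc_vertices G \<and> x \<noteq> y \<and>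
     cyclic_group (subgroup_generated G {x, y})"

inductive cyc_walk :: "('a, 'b) monoid_scheme \<Rightarrow> 'a \<Rightarrow> 'a \<Rightarrow> nat \<Rightarrow> bool" for G where
  nil: "x \<in> cyc_vertices G \<Longrightarrow> cyc_walk G x x 0"
| step: "cyc_adj G x y \<Longrightarrow> cyc_walk G y z n \<Longrightarrow> cyc_walk G x z (Suc n)"

definition cyc_connected :: "('a, 'b) monoid_scheme \<Rightarrow> bool" where
  "cyc_connected G \<longleftrightarrow> (\<forall>x \<in> cyc_vertices G. \<forall>y \<in> cyc_vertices G. \<exists>n. cyc_walk G x y n)"

text \<open>Graph distance (meaningful when the graph is connected).\<close>
definition cyc_dist :: "('a, 'b) monoid_scheme \<Rightarrow> 'a \<Rightarrow> 'a \<Rightarrow> nat" where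
  "cyc_dist G x y = (LEAST n. cyc_walk G x y n)"

definition cyc_diam :: "('a, 'b) monoid_scheme \<Rightarrow> nat" where
  "cyc_diam G = Max {cyc_dist G x y | x y. x \<in> cyc_vertices G \<and> y \<in> cyc_vertices G}"

definition group_center :: "('a, 'b) monoid_scheme \<Rightarrow> 'a set" where
  "group_center G = {z \<in> carrier G. \<forall>g \<in> carrier G. z \<otimes>\<^bsub>G\<^esub> g = g \<otimes>\<^bsub>G\<^esub> z}"

end

theory Submission
  imports Defs
begin

context group begin

abbreviation pw :: "'a \<Rightarrow> 'a set" where "pw c \<equiv> range (\<lambda>n::int. c [^] n)"

lemma adj_elim:
  assumes "cyc_adj G x y"
  shows "\<exists>c\<in>carrier G. x \<in> pw c \<and> y \<in> pw c"
proof -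
  let ?H = "subgroup_generated G {x,y}"
  have xy: "x \<in> carrier G" "y \<in> carrier G" using assms unfolding cyc_adj_def cyc_vertices_def by auto
  have cy: "cyclic_group ?H" using assms unfolding cyc_adj_def by auto
  have gH: "group ?H" by simp
  obtain c where c: "c \<in> carrier ?H" "carrier ?H = range (\<lambda>n::int. c [^]\<^bsub>?H\<^esub> n)"
    using group.cyclic_group[OF gH] cy by blast
  have c2: "carrier ?H = pw c" using c int_pow_subgroup_generated[OF c(1)] by simp
  have "{x,y} \<subseteq> carrier ?H" using subgroup_generated_subset_carrier_subset[of "{x,y}"] xy by auto
  moreover have "c \<in> carrier G" using c(1) carrier_subgroup_generated_subset by blast
  ultimately show ?thesis using c2 by auto
qed

lemma adj_intro:
  assumes "x \<in> carrier G" "y \<in> carrier G" "x \<noteq> \<one>" "y \<noteq> \<one>" "x \<noteq> y" "c \<in> carrier G"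
    "x \<in> pw c" "y \<in> pw c" "c \<in> generate G {x,y}"
  shows "cyc_adj G x y"
proof -
  let ?H = "subgroup_generated G {x,y}"
  have s: "subgroup (pw c) G" using subgroup_of_powers assms by simp
  have g: "subgroup (generate G {x,y}) G" using generate_is_subgroup assms by simp
  have e1: "generate G {x,y} \<subseteq> pw c" using generate_subgroup_incl[OF _ s] assms by auto
  have e2: "pw c \<subseteq> generate G {x,y}" using subgroup_int_pow_closed[OF g assms(9)] by auto
  have cH: "carrier ?H = pw c" using e1 e2 assms(1,2) carrier_subgroup_generated[of G "{x,y}"]
    by (simp add: Int_absorb1)
  have cc: "c \<in> carrier ?H" using cH by (metis int_pow_1 assms(6) rangeI)
  have "carrier ?H = range (\<lambda>n::int. c [^]\<^bsub>?H\<^esub> n)"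
    using cH int_pow_subgroup_generated[OF cc] by simp
  then have "\<exists>d\<in>carrier ?H. carrier ?H = range (\<lambda>n::int. d [^]\<^bsub>?H\<^esub> n)" using cc by blast
  then have "cyclic_group ?H" using group.cyclic_group[OF group_subgroup_generated, of "{x,y}"] by blast
  then show ?thesis using assms unfolding cyc_adj_def cyc_vertices_def by auto
qed

end

context group begin

lemma pw_self: "c \<in> carrier G \<Longrightarrow> c \<in> pw c"
  by (metis int_pow_1 rangeI)

lemma pw_nat: "c \<in> carrier G \<Longrightarrow> c [^] (k::nat) \<in> pw c"
  by (metis int_pow_int rangeI)

lemma pw_sub: "c \<in> carrier G \<Longrightarrow> x \<in> pw c \<Longrightarrow> pw x \<subseteq> pw c"
  using int_pow_pow by auto

lemma pw_carrier: "c \<in> carrier G \<Longrightarrow> x \<in> pw c \<Longrightarrow> x \<in> carrier G"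
  by auto

lemma pw_comm: "c \<in> carrier G \<Longrightarrow> x \<in> pw c \<Longrightarrow> y \<in> pw c \<Longrightarrow> x \<otimes> y = y \<otimes> x"
  by (auto simp flip: int_pow_mult simp: add.commute)

lemma coprime_gen:
  assumes a: "a \<in> carrier G" and b: "b \<in> carrier G" and ab: "a \<otimes> b = b \<otimes> a"
    and cp: "coprime (ord a) (ord b)"
  shows "a \<in> pw (a \<otimes> b)"
proof -
  obtain u v :: int where uv: "u * int (ord b) + v * int (ord a) = 1"
    using cp
    by (metis bezw_aux coprime_commute coprime_imp_gcd_eq_1 int_ops(2))
  let ?i = "int (ord b) * u"
  have "(a \<otimes> b) [^] ?i = a [^] ?i \<otimes> b [^] ?i" using int_pow_mult_distrib[OF ab a b] .
  moreover have "b [^] ?i = \<one>" using int_pow_eq_id[OF b] by simp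
  moreover have "a [^] ?i = a [^] (1::int)"
  proof -
    have "int (ord a) dvd 1 - ?i" using uv
    proof -
      have "1 - ?i = v * int (ord a)" using uv by (simp add: algebra_simps)
      then show ?thesis by simp
    qed
    then show ?thesis using int_pow_eq[OF a] by simp
  qed
  ultimately have "(a \<otimes> b) [^] ?i = a" using a by simp
  then show ?thesis by (metis rangeI)
qed

lemma prime_order_gen:
  assumes fin: "finite (carrier G)" and c: "c \<in> carrier G"
    and x: "x \<in> pw c" and y: "y \<in> pw c"
    and p: "Factorial_Ring.prime (p::nat)" and ox: "ord x = p" and oy: "ord y = p"
  shows "x \<in> pw y"
proof -
  obtain i :: int where i: "x = c [^] i" using x by auto
  obtain j :: int where j: "y = c [^] j" using y by auto
  define N where "N = int (ord c)"
  have xc: "x \<in> carrier G" "y \<in> carrier G" using x y c by auto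
  have "x [^] int p = \<one>" using ox xc int_pow_eq_id by simp
  then have Nip: "N dvd i * int p" using i c int_pow_pow int_pow_eq_id N_def by simp
  have "y [^] int p = \<one>" using oy xc int_pow_eq_id by simp
  then have Njp: "N dvd j * int p" using j c int_pow_pow int_pow_eq_id N_def by simp
  have "y \<noteq> \<one>" using oy p ord_eq_1 xc by (metis not_prime_1)
  then have nNj: "\<not> N dvd j" using j c int_pow_eq_id N_def by simp
  have pN: "int p dvd N"
  proof (rule ccontr)
    assume "\<not> int p dvd N"
    then have "coprime N (int p)" using p
      by (metis prime_imp_coprime coprime_commute prime_nat_int_transfer)
    then have "N dvd j" using Njp coprime_dvd_mult_left_iff by blast
    then show False using nNj by simp
  qed
  then obtain M where M: "N = int p * M" by blast
  have p0: "int p \<noteq> 0" using p by auto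
  have "M dvd i" using Nip M p0 by (simp add: mult.commute)
  then obtain i' where i': "i = M * i'" by blast
  have "M dvd j" using Njp M p0 by (simp add: mult.commute)
  then obtain j' where j': "j = M * j'" by blast
  have "\<not> int p dvd j'" using nNj M j' by auto
  then have "coprime j' (int p)" using p
    by (metis prime_imp_coprime coprime_commute prime_nat_int_transfer)
  then obtain u v :: int where uv: "u * j' + v * int p = 1"
    using bezout_int[of j' "int p"] by (auto simp add: coprime_iff_gcd_eq_1)
  have "y [^] (u * i') = c [^] (j * (u * i'))" using j c int_pow_pow by simp
  also have "\<dots> = c [^] i"
  proof -
    have "i - j * (u * i') = M * i' * (1 - u * j')" using i' j' by (simp add: algebra_simps)
    also have "\<dots> = N * (i' * v)"
    proof -
      have e: "1 - u * j' = v * int p" using uv by linarith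
      show ?thesis by (simp only: e M) (simp add: algebra_simps)
    qed
    finally have "N dvd i - j * (u * i')" by simp
    then show ?thesis using int_pow_eq[OF c] N_def by simp
  qed
  finally show ?thesis using i by (metis rangeI)
qed

end

lemma dd: "(p::nat) dvd n \<Longrightarrow> n \<noteq> 0 \<Longrightarrow> n div (n div p) = p"
proof -
  assume "p dvd n" "n \<noteq> 0"
  then obtain m where m: "n = p * m" by blast
  then have "m \<noteq> 0" "p \<noteq> 0" using \<open>n \<noteq> 0\<close> by auto
  then show ?thesis using m by simp
qed

lemma walk_vert: "cyc_walk G x y n \<Longrightarrow> x \<in> cyc_vertices G \<and> y \<in> cyc_vertices G"
  by (induction rule: cyc_walk.induct) (auto simp: cyc_adj_def)

lemma walk_trans: "cyc_walk G x y m \<Longrightarrow> cyc_walk G y w n \<Longrightarrow> cyc_walk G x w (m + n)"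
  by (induction rule: cyc_walk.induct) (auto intro: cyc_walk.step)

lemma adj_sym: "cyc_adj G x y \<Longrightarrow> cyc_adj G y x"
  unfolding cyc_adj_def by (auto simp: insert_commute)

lemma walk1: "cyc_adj G x y \<Longrightarrow> cyc_walk G x y 1"
  using cyc_walk.step[of G x y y 0] cyc_walk.nil[of y G] by (auto simp: cyc_adj_def)

lemma walk_sym: "cyc_walk G x y n \<Longrightarrow> cyc_walk G y x n"
proof (induction rule: cyc_walk.induct)
  case (nil x)
  then show ?case by (rule cyc_walk.nil)
next
  case (step x y z n)
  have "cyc_walk G z x (n + 1)" using walk_trans[OF step.IH walk1[OF adj_sym[OF step.hyps(1)]]] .
  then show ?case by simp
qed

context group begin

lemma adj_coprime:
  assumes "x \<in> carrier G" "y \<in> carrier G" "x \<noteq> \<one>" "y \<noteq> \<one>" "x \<noteq> y"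
    "x \<otimes> y = y \<otimes> x" "coprime (ord x) (ord y)"
  shows "cyc_adj G x y"
proof (rule adj_intro[of x y "x \<otimes> y"])
  show "x \<in> pw (x \<otimes> y)" using coprime_gen assms by blast
  have "y \<in> pw (y \<otimes> x)" using coprime_gen[of y x] assms by (simp add: coprime_commute)
  then show "y \<in> pw (x \<otimes> y)" using assms by simp
  show "x \<otimes> y \<in> generate G {x, y}" by (simp add: generate.eng generate.incl)
qed (use assms in auto)

lemma adj_pow:
  assumes "x \<in> carrier G" "y \<in> pw x" "x \<noteq> \<one>" "y \<noteq> \<one>" "x \<noteq> y"
  shows "cyc_adj G x y"
proof (rule adj_intro[of x y x])
  show "x \<in> generate G {x, y}" by (rule generate.incl) simp
qed (use assms pw_self in auto)

lemma path_arg: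
  assumes fin: "finite (carrier G)" and w: "\<omega> \<in> carrier G" and op: "ord \<omega> = p"
    and p: "Factorial_Ring.prime (p::nat)"
  shows "cyc_walk G v w n \<Longrightarrow> \<omega> \<in> pw v \<Longrightarrow> \<omega> \<notin> pw w \<Longrightarrow>
    \<exists>d\<in>carrier G. d \<noteq> \<one> \<and> d \<otimes> \<omega> = \<omega> \<otimes> d \<and> coprime (ord d) p"
proof (induction rule: cyc_walk.induct)
  case (nil x)
  then show ?case by simp
next
  case (step v u w n)
  show ?case
  proof (cases "\<omega> \<in> pw u")
    case True
    then show ?thesis using step by blast
  next
    case False
    obtain c where c: "c \<in> carrier G" "v \<in> pw c" "u \<in> pw c" using adj_elim[OF step.hyps(1)] by blast
    have wc: "\<omega> \<in> pw c" using pw_sub[OF c(1) c(2)] step.prems by auto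
    have u: "u \<in> carrier G" "u \<noteq> \<one>" using step.hyps(1) by (auto simp: cyc_adj_def cyc_vertices_def)
    have o1: "ord u \<ge> 1" using ord_ge_1[OF fin u(1)] .
    have np: "\<not> p dvd ord u"
    proof
      assume pd: "p dvd ord u"
      define u' where "u' = u [^] (ord u div p)"
      have k: "ord u div p dvd ord u" "ord u div p \<noteq> 0" using pd o1
        by (auto simp: dvd_div_eq_0_iff) 
      have ou': "ord u' = p" unfolding u'_def using ord_pow[OF u(1) k] dd[OF pd] o1 by simp
      have u'u: "u' \<in> pw u" unfolding u'_def using pw_nat u(1) by blast
      have "u' \<in> pw c" using pw_sub[OF c(1) c(3)] u'u by auto
      then have "\<omega> \<in> pw u'" using prime_order_gen[OF fin c(1) wc _ p op ou'] by blast
      then have "\<omega> \<in> pw u" using pw_sub[OF u(1) u'u] by auto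
      then show False using False by simp
    qed
    have "coprime (ord u) p" using np p by (metis prime_imp_coprime coprime_commute)
    moreover have "u \<otimes> \<omega> = \<omega> \<otimes> u" using pw_comm[OF c(1) c(3) wc] .
    ultimately show ?thesis using u by blast
  qed
qed

end

lemma walk1_le: "cyc_adj G x y \<Longrightarrow> 1 \<le> k \<Longrightarrow> \<exists>j\<le>k. cyc_walk G x y j"
  by (intro exI[of _ 1] conjI walk1)

context group begin

lemma near_z:
  assumes fin: "finite (carrier G)" and conn: "cyc_connected G"
    and z: "z \<in> carrier G" and zc: "\<forall>g\<in>carrier G. z \<otimes> g = g \<otimes> z"
    and oz: "ord z = p" and p: "Factorial_Ring.prime (p::nat)"
    and g: "g \<in> cyc_vertices G"
  shows "\<exists>k\<le>3. cyc_walk G g z k"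
proof -
  have gc: "g \<in> carrier G" "g \<noteq> \<one>" using g by (auto simp: cyc_vertices_def)
  have p1: "p \<noteq> 1" using prime_gt_1_nat[OF p] by simp
  have z1: "z \<noteq> \<one>" using oz p1 z ord_eq_1 by auto
  have zv: "z \<in> cyc_vertices G" using z z1 by (auto simp: cyc_vertices_def)
  have cpp: "\<not> coprime p p" using p1 by simp
  show ?thesis
  proof (cases "p dvd ord g")
    case False
    show ?thesis
    proof (cases "g = z")
      case True
      then show ?thesis using cyc_walk.nil[OF zv] by auto
    next
      case False2: False
      have "coprime (ord g) (ord z)" using False p oz by (metis prime_imp_coprime coprime_commute)
      then have "cyc_adj G g z" using adj_coprime[OF gc(1) z gc(2) z1 False2] zc gc by simp
      then show ?thesis by (rule walk1_le) simp
    qed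
  next
    case True
    have o1: "ord g \<ge> 1" using ord_ge_1[OF fin gc(1)] .
    define \<omega> where "\<omega> = g [^] (ord g div p)"
    have k: "ord g div p dvd ord g" "ord g div p \<noteq> 0" using True o1
      by (auto simp: dvd_div_eq_0_iff)
    have ow: "ord \<omega> = p" unfolding \<omega>_def using ord_pow[OF gc(1) k] dd[OF True] o1 by simp
    have wg: "\<omega> \<in> pw g" unfolding \<omega>_def using pw_nat gc(1) by blast
    have wc: "\<omega> \<in> carrier G" using wg gc by auto
    have w1: "\<omega> \<noteq> \<one>" using ow p1 wc ord_eq_1 by auto
    have wv: "\<omega> \<in> cyc_vertices G" using wc w1 by (auto simp: cyc_vertices_def)
    have A: "\<exists>k\<le>1. cyc_walk G g \<omega> k"
    proof (cases "g = \<omega>")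
      case True
      then show ?thesis using cyc_walk.nil[OF wv] by auto
    next
      case False
      then have "cyc_adj G g \<omega>" using adj_pow[OF gc(1) wg gc(2) w1] by simp
      then show ?thesis by (rule walk1_le) simp
    qed
    have B: "\<exists>k\<le>2. cyc_walk G \<omega> z k"
    proof (cases "z \<in> pw \<omega>")
      case True
      show ?thesis
      proof (cases "\<omega> = z")
        case True
        then show ?thesis using cyc_walk.nil[OF zv] by auto
      next
        case False
        then have "cyc_adj G \<omega> z" using adj_pow[OF wc True w1 z1] by simp
        then show ?thesis by (rule walk1_le) simp
      qed
    next
      case False
      have nz: "\<omega> \<notin> pw z"
      proof
        assume "\<omega> \<in> pw z"
        then have "z \<in> pw \<omega>" using prime_order_gen[OF fin z pw_self[OF z] _ p oz ow] by blast
        then show False using False by simp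
      qed
      obtain n where "cyc_walk G \<omega> z n" using conn wv zv by (auto simp: cyc_connected_def)
      then obtain d where d: "d \<in> carrier G" "d \<noteq> \<one>" "d \<otimes> \<omega> = \<omega> \<otimes> d" "coprime (ord d) p"
        using path_arg[OF fin wc ow p] pw_self[OF wc] nz by blast
      have dw: "d \<noteq> \<omega>" using d(4) ow cpp by auto
      have dz: "d \<noteq> z" using d(4) oz cpp by auto
      have a1: "cyc_adj G \<omega> d" using adj_coprime[OF wc d(1) w1 d(2) dw[symmetric]] d ow
        by (simp add: coprime_commute)
      have a2: "cyc_adj G d z" using adj_coprime[OF d(1) z d(2) z1 dz] d oz zc by simp
      have "cyc_walk G \<omega> z (1 + 1)" using walk_trans[OF walk1[OF a1] walk1[OF a2]] .
      then show ?thesis by (intro exI[of _ "1+1"]) simp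
    qed
    from A B obtain a b where ab: "a \<le> 1" "b \<le> 2" "cyc_walk G g \<omega> a" "cyc_walk G \<omega> z b" by blast
    have "cyc_walk G g z (a + b)" using walk_trans[OF ab(3,4)] .
    then show ?thesis using ab by (intro exI[of _ "a+b"]) simp
  qed
qed

lemma main:
  assumes "finite (carrier G)"
    and "cyc_connected G" and "cyc_diam G > 6"
  shows "group_center G = {\<one>}"
proof (rule ccontr)
  assume ne: "group_center G \<noteq> {\<one>}"
  have "\<one> \<in> group_center G" by (simp add: group_center_def)
  have "\<exists>z0\<in>group_center G. z0 \<noteq> \<one>"
  proof (rule ccontr)
    assume "\<not> ?thesis"
    then have "group_center G \<subseteq> {\<one>}" by auto
    then show False using ne \<open>\<one> \<in> group_center G\<close> by auto
  qed
  then obtain z0 where z0: "z0 \<in> carrier G" "z0 \<noteq> \<one>" "\<forall>g\<in>carrier G. z0 \<otimes> g = g \<otimes> z0"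
    unfolding group_center_def by blast
  have "ord z0 \<noteq> 1" using z0 ord_eq_1 by auto
  then obtain p :: nat where p: "Factorial_Ring.prime p" "p dvd ord z0" using prime_factor_nat by blast
  have o1: "ord z0 \<ge> 1" using ord_ge_1[OF assms(1) z0(1)] .
  define z where "z = z0 [^] (ord z0 div p)"
  have k: "ord z0 div p dvd ord z0" "ord z0 div p \<noteq> 0" using p o1
    by (auto simp: dvd_div_eq_0_iff)
  have oz: "ord z = p" unfolding z_def using ord_pow[OF z0(1) k] dd[OF p(2)] o1 by simp
  have zc: "z \<in> carrier G" unfolding z_def using z0 by simp
  have zcomm: "\<forall>g\<in>carrier G. z \<otimes> g = g \<otimes> z"
  proof
    fix g assume g: "g \<in> carrier G"
    show "z \<otimes> g = g \<otimes> z" unfolding z_def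
      using group_commutes_pow[of z0 g "ord z0 div p"] z0 g by simp
  qed
  have z1: "z \<noteq> \<one>" using oz prime_gt_1_nat[OF p(1)] zc ord_eq_1 by auto
  have zv: "z \<in> cyc_vertices G" using zc z1 by (auto simp: cyc_vertices_def)
  have dist: "cyc_dist G x y \<le> 6" if x: "x \<in> cyc_vertices G" and y: "y \<in> cyc_vertices G" for x y
  proof -
    obtain a where a: "a \<le> 3" "cyc_walk G x z a"
      using near_z[OF assms(1,2) zc zcomm oz p(1) x] by blast
    obtain b where b: "b \<le> 3" "cyc_walk G y z b"
      using near_z[OF assms(1,2) zc zcomm oz p(1) y] by blast
    have "cyc_walk G x y (a + b)" using walk_trans[OF a(2) walk_sym[OF b(2)]] .
    then have "cyc_dist G x y \<le> a + b" unfolding cyc_dist_def by (rule Least_le)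
    then show ?thesis using a b by simp
  qed
  let ?S = "{cyc_dist G x y | x y. x \<in> cyc_vertices G \<and> y \<in> cyc_vertices G}"
  have S6: "?S \<subseteq> {..6}"
  proof
    fix n assume "n \<in> ?S"
    then obtain x y where "n = cyc_dist G x y" "x \<in> cyc_vertices G" "y \<in> cyc_vertices G" by blast
    then show "n \<in> {..6}" using dist[of x y] by simp
  qed
  have "finite ?S" using finite_subset[OF S6] by simp
  moreover have "?S \<noteq> {}" using zv by blast
  ultimately have "Max ?S \<le> 6" using S6 by (intro Max.boundedI) auto
  then show False using assms(3) unfolding cyc_diam_def by simp
qed

end

theorem lemma3p4:
  fixes G :: "('a, 'b) monoid_scheme"
  assumes "group G" and "finite (carrier G)"
    and "cyc_connected G" and "cyc_diam G > 6"
  shows "group_center G = {\<one>\<^bsub>G\<^esub>}"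
  using group.main[OF assms] .

end
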